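(* Let $f:[0,\infty)\to[0,\infty)$ be continuous with $f(0)=0$, $f(v)>0$ for $v>0$, $v\mapsto f(v)/v$ nondecreasing on $(0,\infty)$, and $\lim_{v\to0^+}f_M(v)/v=0$, where $f_M(v):=\sup_{a\in(0,1)}\frac{f(av)}{f(a)}$ for $v\ge0$. Let $0\le\varphi\in L^1_{\mathrm{loc}}([0,\infty))$. Suppose that for no $0<u_0\in L^1(\mathbb{R}^n)$ does the problem $u_t-\mathcal{L}u=\varphi(t)f(u)$, $u(0)=u_0$, have a global mild solution, i.e. a function $u$ on $(0,\infty)\times\mathbb{R}^n$, finite everywhere, with $$u(t,x)=\int_{\mathbb{R}^n}\Gamma(0,y;t,x)u_0(y)\,dy+\int_0^t\int_{\mathbb{R}^n}\Gamma(0,y;t-\tau,x)\varphi(\tau)f(u(\tau,y))\,dy\,d\tau\quad\text{for all }t>0,\ x\in\mathbb{R}^n.$$ Then: (i) for every $0<w\in L^1(\mathbb{R}^n)$, writing $A_w(\tau,x):=\int_{\mathbb{R}^n}\Gamma(0,y;\tau,x)w(y)\,dy$, $$\int_0^\infty\varphi(\tau)\frac{f\big(\|A_w(\tau,\cdot)\|_{L^\infty(\mathbb{R}^n)}\big)}{\|A_w(\tau,\cdot)\|_{L^\infty(\mathbb{R}^n)}}\,d\tau=+\infty;$$ (ii) for every $\omega>0$, $$\int_1^\infty\varphi(\tau)\,\tau^{\frac q2}f\big(\omega\tau^{-\frac q2}\big)\,d\tau=+\infty.$$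
   Context: Standing setting. Let $X=\{X_1,\dots,X_m\}$ be smooth vector fields on $\mathbb{R}^n$, linearly independent as vector fields, satisfying: (H1) there are integers $1=\sigma_1\le\dots\le\sigma_n$ such that, with dilations $\delta_\lambda(x)=(\lambda^{\sigma_1}x_1,\dots,\lambda^{\sigma_n}x_n)$, $\lambda>0$, each $X_j$ is homogeneous of degree $1$, i.e. $X_j(\phi\circ\delta_\lambda)=\lambda\,(X_j\phi)\circ\delta_\lambda$ for all $\phi\in C^\infty(\mathbb{R}^n)$, $\lambda>0$; (H2) Hörmander's rank condition at $0$: the values at $0$ of the vector fields in the Lie algebra generated by $X_1,\dots,X_m$ span $\mathbb{R}^n$. Put $q:=\sigma_1+\dots+\sigma_n$, $\mathcal{L}:=\sum_{j=1}^mX_j^2$, $\mathcal{H}:=\partial_t-\mathcal{L}$. $\Gamma(t,x;s,y)$ denotes the global fundamental solution (heat kernel) of $\mathcal{H}$; for $t>0$, $x\mapsto\int\Gamma(0,y;t,x)\varphi(y)dy$ is the heat semigroup of $\mathcal{L}$ applied to $\varphi$. Known properties: $\Gamma\ge0$; $\Gamma(t,x;s,y)=0$ if $s\le t$; $\Gamma(0,y;t,x)=\Gamma(0,x;t,y)$; $\int_{\mathbb{R}^n}\Gamma(0,y;t,x)\,dy=1$ for $t>0$; $\Gamma(0,y;t+s,x)=\int\Gamma(0,w;t,x)\Gamma(0,y;s,w)\,dw$ for $t,s>0$; there is $\rho>1$ with $\frac{1}{\rho|B_X(x,\sqrt s)|}e^{-\rho d_X(x,y)^2/s}\le\Gamma(0,x;s,y)\le\frac{\rho}{|B_X(x,\sqrt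 s)|}e^{-d_X(x,y)^2/(\rho s)}$ for $s>0$, where $d_X$ is the Carnot–Carathéodory distance of $X$ and $B_X$ its balls; and $|B_X(x,r)|\ge c\,r^q$ for some $c>0$ and all $x,r$. *)

theory Defs
  imports "HOL-Analysis.Analysis" "HOL-Probability.Essential_Supremum"
begin

text \<open>The heat kernel is encoded as
  Gam t y x = Gamma(0,y;t,x) (source point y at time 0, target x at time t).
  The Hoermander vector fields are not modelled; the heat kernel Gam together with the
  Carnot-Caratheodory distance d and the homogeneous dimension q = sum of the sigma_i
  are taken as data satisfying the known properties listed in the setting.\<close>

definition homog_exponents :: "('n::finite \<Rightarrow> nat) \<Rightarrow> bool" where
  "homog_exponents \<sigma> \<longleftrightarrow> (\<forall>i. 1 \<le> \<sigma> i) \<and> (\<exists>i. \<sigma> i = 1)"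

definition hom_dim :: "('n::finite \<Rightarrow> nat) \<Rightarrow> nat" where
  "hom_dim \<sigma> = (\<Sum>i\<in>UNIV. \<sigma> i)"

definition ball_vol :: "(real^'n \<Rightarrow> real^'n \<Rightarrow> real) \<Rightarrow> real^'n \<Rightarrow> real \<Rightarrow> real" where
  "ball_vol d x r = measure lborel {y. d x y < r}"

definition heat_kernel_props ::
  "nat \<Rightarrow> (real \<Rightarrow> real^'n \<Rightarrow> real^'n \<Rightarrow> real) \<Rightarrow> (real^'n \<Rightarrow> real^'n \<Rightarrow> real) \<Rightarrow> bool" where
  "heat_kernel_props q Gam d \<longleftrightarrow>
     (\<lambda>p. Gam (fst p) (fst (snd p)) (snd (snd p))) \<in> borel_measurable borel \<and>
     (\<forall>t y x. 0 \<le> Gam t y x) \<and>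
     (\<forall>t y x. t \<le> 0 \<longrightarrow> Gam t y x = 0) \<and>
     (\<forall>t y x. Gam t y x = Gam t x y) \<and>
     (\<forall>t x. 0 < t \<longrightarrow> integrable lborel (\<lambda>y. Gam t y x) \<and> (\<integral>y. Gam t y x \<partial>lborel) = 1) \<and>
     (\<forall>t s y x. 0 < t \<longrightarrow> 0 < s \<longrightarrow>
        Gam (t + s) y x = (\<integral>w. Gam t w x * Gam s y w \<partial>lborel)) \<and>
     (\<exists>\<rho>>1. \<forall>s x y. 0 < s \<longrightarrow>
        exp (- \<rho> * d x y ^ 2 / s) / (\<rho> * ball_vol d x (sqrt s)) \<le> Gam s x y \<and>
        Gam s x y \<le> \<rho> / ball_vol d x (sqrt s) * exp (- (d x y ^ 2) / (\<rho> * s))) \<and>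
     (\<exists>c>0. \<forall>x r. 0 \<le> r \<longrightarrow> c * r ^ q \<le> ball_vol d x r)"

text \<open>d is a continuous metric (as the Carnot-Caratheodory distance is under (H2)).\<close>
definition cc_metric :: "(real^'n \<Rightarrow> real^'n \<Rightarrow> real) \<Rightarrow> bool" where
  "cc_metric d \<longleftrightarrow> continuous_on UNIV (\<lambda>p. d (fst p) (snd p)) \<and>
     (\<forall>x y. 0 \<le> d x y \<and> (d x y = 0 \<longleftrightarrow> x = y) \<and> d x y = d y x) \<and>
     (\<forall>x y z. d x z \<le> d x y + d y z)"

definition fM :: "(real \<Rightarrow> real) \<Rightarrow> real \<Rightarrow> real" where
  "fM f v = (SUP a\<in>{0<..<1}. f (a * v) / f a)"

text \<open>0 < u0 in L^1(R^n): nonnegative, integrable, not a.e. zero.\<close>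
definition pos_L1 :: "(real^'n \<Rightarrow> real) \<Rightarrow> bool" where
  "pos_L1 w \<longleftrightarrow> (\<forall>x. 0 \<le> w x) \<and> integrable lborel w \<and> 0 < (\<integral>x. w x \<partial>lborel)"

definition heat_sg :: "(real \<Rightarrow> real^'n \<Rightarrow> real^'n \<Rightarrow> real) \<Rightarrow> (real^'n \<Rightarrow> real) \<Rightarrow> real \<Rightarrow> real^'n \<Rightarrow> real" where
  "heat_sg Gam w t x = (\<integral>y. Gam t y x * w y \<partial>lborel)"

definition Linf_norm :: "(real^'n \<Rightarrow> real) \<Rightarrow> ereal" where
  "Linf_norm g = esssup lborel (\<lambda>x. ereal \<bar>g x\<bar>)"

definition global_mild_solution ::
  "(real \<Rightarrow> real^'n \<Rightarrow> real^'n \<Rightarrow> real) \<Rightarrow> (real \<Rightarrow> real) \<Rightarrow> (real \<Rightarrow> real) \<Rightarrow>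
   (real^'n \<Rightarrow> real) \<Rightarrow> (real \<Rightarrow> real^'n \<Rightarrow> real) \<Rightarrow> bool" where
  "global_mild_solution Gam \<phi> f u0 u \<longleftrightarrow>
     (\<lambda>p. u (fst p) (snd p)) \<in> borel_measurable borel \<and>
     (\<forall>t x. 0 < t \<longrightarrow> 0 \<le> u t x) \<and>
     (\<forall>t x. 0 < t \<longrightarrow>
        ennreal (u t x) =
          (\<integral>\<^sup>+y. ennreal (Gam t y x * u0 y) \<partial>lborel) +
          (\<integral>\<^sup>+\<tau>. indicator {0<..<t} \<tau> *
              (\<integral>\<^sup>+y. ennreal (Gam (t - \<tau>) y x * \<phi> \<tau> * f (u \<tau> y)) \<partial>lborel) \<partial>lborel))"

end

theory Submission
  imports Defs
begin

locale hk =
  fixes q :: nat and Gam :: "real \<Rightarrow> real^'n::finite \<Rightarrow> real^'n \<Rightarrow> real" and d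
  assumes kernel: "heat_kernel_props q Gam d"
begin

lemma Gam_meas_raw: "(\<lambda>p. Gam (fst p) (fst (snd p)) (snd (snd p))) \<in> borel_measurable borel"
  using kernel unfolding heat_kernel_props_def by (elim conjE) assumption

lemma Gam_meas[measurable]:
  assumes [measurable]: "a \<in> borel_measurable M" "b \<in> M \<rightarrow>\<^sub>M borel" "c \<in> M \<rightarrow>\<^sub>M borel"
  shows "(\<lambda>x. Gam (a x) (b x) (c x)) \<in> borel_measurable M"
proof -
  have "(\<lambda>x. (b x, c x)) \<in> M \<rightarrow>\<^sub>M (borel \<Otimes>\<^sub>M borel :: ((real^'n) \<times> (real^'n)) measure)"
    by (rule measurable_Pair) (use assms in auto)
  then have bc: "(\<lambda>x. (b x, c x)) \<in> M \<rightarrow>\<^sub>M (borel :: ((real^'n) \<times> (real^'n)) measure)"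
    by (simp only: borel_prod)
  have "(\<lambda>x. (a x, b x, c x)) \<in> M \<rightarrow>\<^sub>M (borel \<Otimes>\<^sub>M borel :: (real \<times> (real^'n) \<times> (real^'n)) measure)"
    by (rule measurable_Pair) (use assms bc in auto)
  then have "(\<lambda>x. (a x, b x, c x)) \<in> M \<rightarrow>\<^sub>M (borel :: (real \<times> (real^'n) \<times> (real^'n)) measure)"
    by (simp only: borel_prod)
  from measurable_compose[OF this Gam_meas_raw] show ?thesis by (simp only: fst_conv snd_conv)
qed

lemmas KK = kernel[unfolded heat_kernel_props_def]
lemma Gam_nonneg: "0 \<le> Gam t y x" using KK[THEN conjunct2, THEN conjunct1] by blast
lemma Gam_zero: "t \<le> 0 \<Longrightarrow> Gam t y x = 0" using KK[THEN conjunct2, THEN conjunct2, THEN conjunct1] by blast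
lemma Gam_sym: "Gam t y x = Gam t x y" using KK[THEN conjunct2, THEN conjunct2, THEN conjunct2, THEN conjunct1] by metis
lemma Gam_int: "0 < t \<Longrightarrow> integrable lborel (\<lambda>y. Gam t y x)"
  using KK[THEN conjunct2, THEN conjunct2, THEN conjunct2, THEN conjunct2, THEN conjunct1] by blast
lemma Gam_int1: "0 < t \<Longrightarrow> (\<integral>y. Gam t y x \<partial>lborel) = 1"
  using KK[THEN conjunct2, THEN conjunct2, THEN conjunct2, THEN conjunct2, THEN conjunct1] by blast
lemma Gam_semi: "0 < t \<Longrightarrow> 0 < s \<Longrightarrow> Gam (t + s) y x = (\<integral>w. Gam t w x * Gam s y w \<partial>lborel)"
  using KK[THEN conjunct2, THEN conjunct2, THEN conjunct2, THEN conjunct2, THEN conjunct2, THEN conjunct1] by blast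
lemma Gam_upper: "\<exists>\<rho>>1. \<forall>s x y. 0 < s \<longrightarrow> Gam s x y \<le> \<rho> / ball_vol d x (sqrt s) * exp (- (d x y ^ 2) / (\<rho> * s))"
  using KK[THEN conjunct2, THEN conjunct2, THEN conjunct2, THEN conjunct2, THEN conjunct2, THEN conjunct2, THEN conjunct1] by blast
lemma ball_lower: "\<exists>c>0. \<forall>x r. 0 \<le> r \<longrightarrow> c * r ^ q \<le> ball_vol d x r"
  using KK[THEN conjunct2, THEN conjunct2, THEN conjunct2, THEN conjunct2, THEN conjunct2, THEN conjunct2, THEN conjunct2] by blast

lemma Gam_bound: "\<exists>K>0. \<forall>s x y. 0 < s \<longrightarrow> Gam s x y \<le> K / s powr (real q / 2)"
proof -
  from Gam_upper obtain \<rho> where rho: "\<rho> > 1" and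
    b: "\<forall>s x y. 0 < s \<longrightarrow> Gam s x y \<le> \<rho> / ball_vol d x (sqrt s) * exp (- (d x y ^ 2) / (\<rho> * s))"
    by blast
  from ball_lower obtain c where c: "c > 0" and cb: "\<forall>x r. 0 \<le> r \<longrightarrow> c * r ^ q \<le> ball_vol d x r"
    by blast
  show ?thesis
  proof (intro exI[of _ "\<rho> / c"] conjI allI impI)
    show "0 < \<rho> / c" using rho c by simp
    fix s x y assume s: "(0::real) < s"
    have sp: "sqrt s ^ q = s powr (real q / 2)"
      using s by (simp add: powr_half_sqrt[symmetric] powr_realpow[symmetric] powr_powr)
    have pos: "0 < c * s powr (real q / 2)" using c s by simp
    have bv: "c * s powr (real q / 2) \<le> ball_vol d x (sqrt s)" using cb[rule_format, of "sqrt s" x] s sp by simp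
    have e: "exp (- (d x y ^ 2) / (\<rho> * s)) \<le> 1" using rho s by (simp add: divide_nonneg_pos)
    have "Gam s x y \<le> \<rho> / ball_vol d x (sqrt s) * exp (- (d x y ^ 2) / (\<rho> * s))" using b s by blast
    also have "\<dots> \<le> \<rho> / ball_vol d x (sqrt s)"
      using e rho pos bv by (intro mult_left_le) auto
    also have "\<dots> \<le> \<rho> / (c * s powr (real q / 2))"
      using rho pos bv by (intro divide_left_mono) auto
    finally show "Gam s x y \<le> \<rho> / c / s powr (real q / 2)" by simp
  qed
qed

lemma Gam_bnd: "0 < s \<Longrightarrow> \<exists>B. \<forall>x y. Gam s x y \<le> B"
  using Gam_bound by blast

lemma Gam_int2: "0 < t \<Longrightarrow> integrable lborel (\<lambda>z. Gam t x z)"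
  using Gam_int[of t x] by (subst Gam_sym) simp

lemma Gam_nn1: "0 < t \<Longrightarrow> (\<integral>\<^sup>+y. ennreal (Gam t y x) \<partial>lborel) = 1"
  using nn_integral_eq_integral[OF Gam_int[of t x]] Gam_int1[of t x] Gam_nonneg by simp

lemma Gam_nn_semi:
  assumes t: "0 < t" and s: "0 < s"
  shows "(\<integral>\<^sup>+z. ennreal (Gam t z x * Gam s y z) \<partial>lborel) = ennreal (Gam (t + s) y x)"
proof -
  obtain B where B: "\<forall>x y. Gam t x y \<le> B" using Gam_bnd[OF t] by blast
  have intB: "integrable lborel (\<lambda>z. B * Gam s y z)" using Gam_int2[OF s, of y] by simp
  have int: "integrable lborel (\<lambda>z. Gam t z x * Gam s y z)"
    by (rule Bochner_Integration.integrable_bound[OF intB])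
       (measurable, intro AE_I2, simp add: Gam_nonneg,
        rule order_trans[OF mult_right_mono[OF B[rule_format] Gam_nonneg] abs_ge_self])
  show ?thesis
    using nn_integral_eq_integral[OF int] Gam_semi[OF t s, of y x] Gam_nonneg by simp
qed

lemma semi_nn:
  fixes g :: "real^'n \<Rightarrow> ennreal"
  assumes t: "0 < t" and s: "0 < s" and g[measurable]: "g \<in> borel_measurable borel"
  shows "(\<integral>\<^sup>+z. ennreal (Gam t z x) * (\<integral>\<^sup>+y. ennreal (Gam s y z) * g y \<partial>lborel) \<partial>lborel)
       = (\<integral>\<^sup>+y. ennreal (Gam (t + s) y x) * g y \<partial>lborel)"
proof -
  have "(\<integral>\<^sup>+z. ennreal (Gam t z x) * (\<integral>\<^sup>+y. ennreal (Gam s y z) * g y \<partial>lborel) \<partial>lborel)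
      = (\<integral>\<^sup>+z. (\<integral>\<^sup>+y. ennreal (Gam t z x) * (ennreal (Gam s y z) * g y) \<partial>lborel) \<partial>lborel)"
    by (intro nn_integral_cong nn_integral_cmult[symmetric]) measurable
  also have "\<dots> = (\<integral>\<^sup>+y. (\<integral>\<^sup>+z. ennreal (Gam t z x) * (ennreal (Gam s y z) * g y) \<partial>lborel) \<partial>lborel)"
    by (rule lborel_pair.Fubini'[symmetric]) measurable
  also have "\<dots> = (\<integral>\<^sup>+y. g y * (\<integral>\<^sup>+z. ennreal (Gam t z x * Gam s y z) \<partial>lborel) \<partial>lborel)"
  proof (intro nn_integral_cong)
    fix y
    have "(\<integral>\<^sup>+z. ennreal (Gam t z x) * (ennreal (Gam s y z) * g y) \<partial>lborel)
        = (\<integral>\<^sup>+z. g y * ennreal (Gam t z x * Gam s y z) \<partial>lborel)"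
      by (intro nn_integral_cong) (simp add: ennreal_mult Gam_nonneg mult_ac)
    also have "\<dots> = g y * (\<integral>\<^sup>+z. ennreal (Gam t z x * Gam s y z) \<partial>lborel)"
      by (rule nn_integral_cmult) measurable
    finally show "(\<integral>\<^sup>+z. ennreal (Gam t z x) * (ennreal (Gam s y z) * g y) \<partial>lborel)
        = g y * (\<integral>\<^sup>+z. ennreal (Gam t z x * Gam s y z) \<partial>lborel)" .
  qed
  also have "\<dots> = (\<integral>\<^sup>+y. ennreal (Gam (t + s) y x) * g y \<partial>lborel)"
    by (intro nn_integral_cong) (simp only: Gam_nn_semi[OF t s] mult.commute[of "g _"])
  finally show ?thesis .
qed

lemma w_meas: "pos_L1 w \<Longrightarrow> w \<in> borel_measurable borel"
  unfolding pos_L1_def using borel_measurable_integrable measurable_lborel2 by blast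

lemma A_meas: assumes "pos_L1 w" shows "heat_sg Gam w t \<in> borel_measurable borel"
proof -
  note [measurable] = w_meas[OF assms]
  have "(\<lambda>x. \<integral>y. Gam t y x * w y \<partial>lborel) \<in> borel_measurable lborel" by measurable
  then show ?thesis unfolding heat_sg_def[abs_def] by simp
qed

lemma A_int: assumes w: "pos_L1 w" and t: "0 < t" shows "integrable lborel (\<lambda>y. Gam t y x * w y)"
proof -
  note [measurable] = w_meas[OF w]
  obtain B where B: "\<forall>x y. Gam t x y \<le> B" using Gam_bnd[OF t] by blast
  have intB: "integrable lborel (\<lambda>y. B * w y)" using w unfolding pos_L1_def by simp
  show ?thesis
    by (rule Bochner_Integration.integrable_bound[OF intB])
       (measurable, intro AE_I2, use w in \<open>simp add: Gam_nonneg pos_L1_def\<close>,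
        rule order_trans[OF mult_right_mono[OF B[rule_format]] abs_ge_self], use w in \<open>simp add: pos_L1_def\<close>)
qed

lemma A_nonneg: assumes "pos_L1 w" shows "0 \<le> heat_sg Gam w t x"
  unfolding heat_sg_def using assms by (intro integral_nonneg_AE) (auto simp: pos_L1_def Gam_nonneg)

lemma A_zero: "t \<le> 0 \<Longrightarrow> heat_sg Gam w t x = 0"
  unfolding heat_sg_def by (simp add: Gam_zero)

lemma A_nn: assumes w: "pos_L1 w" and t: "0 < t"
  shows "ennreal (heat_sg Gam w t x) = (\<integral>\<^sup>+y. ennreal (Gam t y x) * ennreal (w y) \<partial>lborel)"
  using nn_integral_eq_integral[OF A_int[OF w t, of x]] w
  by (simp add: heat_sg_def ennreal_mult Gam_nonneg pos_L1_def)

lemma A_le: assumes w: "pos_L1 w" and t: "0 < t" and B: "\<forall>y. Gam t y x \<le> B"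
  shows "heat_sg Gam w t x \<le> B * (\<integral>y. w y \<partial>lborel)"
proof -
  have "heat_sg Gam w t x \<le> (\<integral>y. B * w y \<partial>lborel)"
    unfolding heat_sg_def using w B t
    by (intro integral_mono A_int) (auto simp: pos_L1_def intro!: mult_right_mono)
  then show ?thesis by simp
qed

lemma A_le_sup: assumes w: "pos_L1 w" and t: "0 < t" and m: "\<forall>y. w y \<le> m"
  shows "heat_sg Gam w t x \<le> m"
proof -
  have "heat_sg Gam w t x \<le> (\<integral>y. Gam t y x * m \<partial>lborel)"
    unfolding heat_sg_def
    by (rule integral_mono[OF A_int[OF w t]]) (use Gam_int[OF t] m Gam_nonneg in \<open>auto intro!: mult_left_mono\<close>)
  then show ?thesis using Gam_int1[OF t] by simp
qed

lemma A_semi: assumes w: "pos_L1 w" and s: "0 < s" and st: "s < t"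
  shows "(\<integral>\<^sup>+z. ennreal (Gam (t - s) z x) * ennreal (heat_sg Gam w s z) \<partial>lborel) = ennreal (heat_sg Gam w t x)"
proof -
  note [measurable] = w_meas[OF w]
  have "(\<integral>\<^sup>+z. ennreal (Gam (t - s) z x) * ennreal (heat_sg Gam w s z) \<partial>lborel)
     = (\<integral>\<^sup>+z. ennreal (Gam (t - s) z x) * (\<integral>\<^sup>+y. ennreal (Gam s y z) * ennreal (w y) \<partial>lborel) \<partial>lborel)"
    by (intro nn_integral_cong) (simp add: A_nn[OF w s])
  also have "\<dots> = (\<integral>\<^sup>+y. ennreal (Gam (t - s + s) y x) * ennreal (w y) \<partial>lborel)"
    by (rule semi_nn) (use s st in auto)
  also have "\<dots> = ennreal (heat_sg Gam w t x)" using A_nn[OF w, of t] s st by simp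
  finally show ?thesis .
qed

definition NN :: "(real^'n \<Rightarrow> real) \<Rightarrow> real \<Rightarrow> real" where
  "NN w t = real_of_ereal (Linf_norm (heat_sg Gam w t))"

lemma Linf_eq: assumes "pos_L1 w" shows "Linf_norm (heat_sg Gam w t) = esssup lborel (\<lambda>x. ereal (heat_sg Gam w t x))"
  unfolding Linf_norm_def using A_nonneg[OF assms] by simp

lemma esssup_ge0: assumes "pos_L1 w" shows "0 \<le> esssup lborel (\<lambda>x. ereal (heat_sg Gam w t x))"
proof -
  have "esssup lborel (\<lambda>x::real^'n. 0::ereal) \<le> esssup lborel (\<lambda>x. ereal (heat_sg Gam w t x))"
    by (rule Essential_Supremum.esssup_mono) (auto simp: A_nonneg[OF assms])
  moreover have "esssup lborel (\<lambda>x::real^'n. 0::ereal) = 0" by (rule esssup_const) simp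
  ultimately show ?thesis by simp
qed

lemma N_props: assumes w: "pos_L1 w" and t: "0 < t"
  shows "ereal (NN w t) = Linf_norm (heat_sg Gam w t)" "0 \<le> NN w t"
    "AE x in lborel. heat_sg Gam w t x \<le> NN w t"
proof -
  note [measurable] = A_meas[OF w]
  obtain B where B: "\<forall>x y. Gam t x y \<le> B" using Gam_bnd[OF t] by blast
  have up: "esssup lborel (\<lambda>x. ereal (heat_sg Gam w t x)) \<le> ereal (B * (\<integral>y. w y \<partial>lborel))"
    by (rule esssup_I) (measurable, use A_le[OF w t] B in auto)
  have lo: "0 \<le> esssup lborel (\<lambda>x. ereal (heat_sg Gam w t x))" by (rule esssup_ge0[OF w])
  show e: "ereal (NN w t) = Linf_norm (heat_sg Gam w t)"
    unfolding NN_def Linf_eq[OF w] using up lo by (cases "esssup lborel (\<lambda>x. ereal (heat_sg Gam w t x))") auto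
  show "0 \<le> NN w t" using e lo Linf_eq[OF w] by (metis ereal_less_eq(5))
  show "AE x in lborel. heat_sg Gam w t x \<le> NN w t"
  proof -
    have e': "esssup lborel (\<lambda>x. ereal (heat_sg Gam w t x)) = ereal (NN w t)" using e Linf_eq[OF w] by simp
    show ?thesis using esssup_AE[of "\<lambda>x. ereal (heat_sg Gam w t x)" lborel] unfolding e'
      by (auto elim!: eventually_mono)
  qed
qed

lemma N_le: assumes w: "pos_L1 w" and t: "0 < t" and K: "\<forall>x. heat_sg Gam w t x \<le> K"
  shows "NN w t \<le> K"
proof -
  note [measurable] = A_meas[OF w]
  have "esssup lborel (\<lambda>x. ereal (heat_sg Gam w t x)) \<le> ereal K"
    by (rule esssup_I) (measurable, use K in auto)
  then have "ereal (NN w t) \<le> ereal K" using N_props(1)[OF w t] Linf_eq[OF w] by simp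
  then show ?thesis by simp
qed

lemma N_zero: "t \<le> 0 \<Longrightarrow> NN w t = 0"
  unfolding NN_def Linf_norm_def using A_zero[of t w] by (simp add: esssup_const)

lemma N_anti: assumes w: "pos_L1 w" and s: "0 < s" and st: "s \<le> t"
  shows "NN w t \<le> NN w s"
proof (cases "s = t")
  case True then show ?thesis by simp
next
  case False
  then have st': "s < t" using st by simp
  note [measurable] = A_meas[OF w]
  have "heat_sg Gam w t x \<le> NN w s" for x
  proof -
    have "ennreal (heat_sg Gam w t x) = (\<integral>\<^sup>+z. ennreal (Gam (t - s) z x) * ennreal (heat_sg Gam w s z) \<partial>lborel)"
      using A_semi[OF w s st'] by simp
    also have "\<dots> \<le> (\<integral>\<^sup>+z. ennreal (Gam (t - s) z x) * ennreal (NN w s) \<partial>lborel)"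
      by (rule nn_integral_mono_AE) (use N_props(3)[OF w s] in \<open>auto elim!: eventually_mono intro!: mult_left_mono ennreal_leI\<close>)
    also have "\<dots> = ennreal (NN w s)"
      by (subst nn_integral_multc) (use Gam_nn1 s st' in auto)
    finally show ?thesis using N_props(2)[OF w s] by (simp add: ennreal_le_iff)
  qed
  then show ?thesis using N_le[OF w] s st by auto
qed

end


locale fq =
  fixes f :: "real \<Rightarrow> real"
  assumes f_cont: "continuous_on {0..} f"
    and f0: "f 0 = 0"
    and f_pos: "\<forall>v>0. 0 < f v"
    and f_quot_mono: "mono_on {0<..} (\<lambda>v. f v / v)"
    and fM_lim: "((\<lambda>v. fM f v / v) \<longlongrightarrow> 0) (at_right 0)"
begin

lemma f_nonneg: "0 \<le> v \<Longrightarrow> 0 \<le> f v"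
  using f0 f_pos by (cases "v = 0") (auto simp: less_le)

lemma quot: "0 < a \<Longrightarrow> a \<le> b \<Longrightarrow> f a / a \<le> f b / b"
  using f_quot_mono unfolding mono_on_def by auto

lemma f_le_quot: assumes "0 \<le> a" "a \<le> b" "0 < b" shows "f a \<le> a * (f b / b)"
proof (cases "a = 0")
  case True then show ?thesis using f0 by simp
next
  case False
  then have a: "0 < a" using assms by simp
  have "f a = a * (f a / a)" using a by simp
  also have "\<dots> \<le> a * (f b / b)" by (rule mult_left_mono[OF quot[OF a assms(2)]]) (use a in simp)
  finally show ?thesis .
qed

lemma f_mono: assumes "0 \<le> a" "a \<le> b" shows "f a \<le> f b"
proof (cases "b = 0")
  case True then show ?thesis using assms by simp
next
  case False
  then have b: "0 < b" using assms by simp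
  have "f a \<le> a * (f b / b)" by (rule f_le_quot) (use assms b in auto)
  also have "\<dots> \<le> b * (f b / b)" using assms f_nonneg[of b] b by (intro mult_right_mono) auto
  also have "\<dots> = f b" using b by simp
  finally show ?thesis .
qed

lemma quot_nonneg: "0 \<le> v \<Longrightarrow> 0 \<le> f v / v"
  using f_nonneg by simp

lemma quot_le_quot: "0 \<le> a \<Longrightarrow> a \<le> b \<Longrightarrow> f a / a \<le> f b / b"
  using quot[of a b] quot_nonneg[of b] by (cases "a = 0") auto

lemma quot_lim: "((\<lambda>s. f s / s) \<longlongrightarrow> 0) (at_right 0)"
proof (rule tendsto_sandwich[where f="\<lambda>_. 0" and h="\<lambda>s. fM f (2 * s) / (2 * s) * (2 * f (1/2))"])
  show "\<forall>\<^sub>F s in at_right 0. 0 \<le> f s / s"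
    by (rule eventually_mono[OF eventually_at_right_less]) (auto intro: quot_nonneg)
  show "\<forall>\<^sub>F s in at_right 0. f s / s \<le> fM f (2 * s) / (2 * s) * (2 * f (1/2))"
    unfolding eventually_at_right_field
  proof (intro exI[of _ "1/2"] conjI allI impI)
    fix s :: real assume s0: "0 < s" and s1: "s < 1/2"
    then have s: "0 < s \<and> s < 1/2" by simp
    have h: "0 < f (1/2)" using f_pos by simp
    have bdd: "bdd_above ((\<lambda>a. f (a * (2 * s)) / f a) ` {0<..<1})"
    proof (rule bdd_aboveI2)
      fix a :: real assume a: "a \<in> {0<..<1}"
      have fa: "0 < f a" using f_pos a by simp
      have "f (a * (2 * s)) \<le> (a * (2 * s)) * (f a / a)"
        using s a by (intro f_le_quot) (auto simp: mult_le_cancel_left1)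
      also have "\<dots> = 2 * s * f a" using a by simp
      finally show "f (a * (2 * s)) / f a \<le> 2 * s" using fa by (simp add: divide_le_eq)
    qed
    have "f (1/2 * (2 * s)) / f (1/2) \<le> fM f (2 * s)"
      unfolding fM_def by (rule cSUP_upper[OF _ bdd]) auto
    then have "f s \<le> fM f (2 * s) * f (1/2)" using h by (simp add: divide_le_eq)
    then show "f s / s \<le> fM f (2 * s) / (2 * s) * (2 * f (1/2))"
      using s by (simp add: divide_le_eq field_simps)
  qed simp
  show "((\<lambda>_. 0) \<longlongrightarrow> (0::real)) (at_right 0)" by simp
  have "filterlim (\<lambda>s. 2 * s) (at_right (0::real)) (at_right 0)"
    by (rule filterlim_at_withinI) (auto simp: eventually_at_filter intro!: tendsto_eq_intros)
  from filterlim_compose[OF fM_lim this]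
  have L: "((\<lambda>s. fM f (2 * s) / (2 * s)) \<longlongrightarrow> 0) (at_right 0)" by simp
  show "((\<lambda>s. fM f (2 * s) / (2 * s) * (2 * f (1/2))) \<longlongrightarrow> 0) (at_right 0)"
    using tendsto_mult[OF L tendsto_const[of "2 * f (1/2)"]] by simp
qed

lemma fp_cont: "continuous_on UNIV (\<lambda>v. f (max 0 v))"
  by (rule continuous_on_compose2[OF f_cont]) (auto intro!: continuous_intros)

lemma fp_meas[measurable]: "g \<in> borel_measurable M \<Longrightarrow> (\<lambda>x. f (max 0 (g x))) \<in> borel_measurable M"
  using measurable_compose[OF _ borel_measurable_continuous_onI[OF fp_cont]] by blast

definition fp :: "real \<Rightarrow> real" where "fp v = f (max 0 v)"

lemma fp_borel[measurable]: "fp \<in> borel_measurable borel"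
  unfolding fp_def[abs_def] using borel_measurable_continuous_onI[OF fp_cont] by simp

lemma fp_eq: "0 \<le> v \<Longrightarrow> fp v = f v"
  unfolding fp_def by simp

end


lemma curry_meas:
  fixes v :: "'a::second_countable_topology \<Rightarrow> 'b::second_countable_topology \<Rightarrow> 'c::topological_space"
  assumes V: "(\<lambda>p. v (fst p) (snd p)) \<in> borel_measurable borel"
    and a: "a \<in> M \<rightarrow>\<^sub>M borel" and b: "b \<in> M \<rightarrow>\<^sub>M borel"
  shows "(\<lambda>z. v (a z) (b z)) \<in> borel_measurable M"
proof -
  have "(\<lambda>z. (a z, b z)) \<in> M \<rightarrow>\<^sub>M (borel \<Otimes>\<^sub>M borel :: ('a \<times> 'b) measure)"
    by (rule measurable_Pair) (use a b in auto)
  then have "(\<lambda>z. (a z, b z)) \<in> M \<rightarrow>\<^sub>M (borel :: ('a \<times> 'b) measure)" by (simp only: borel_prod)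
  from measurable_compose[OF this V] show ?thesis by (simp only: fst_conv snd_conv)
qed

context hk begin

lemma N_meas: assumes w: "pos_L1 w" shows "NN w \<in> borel_measurable borel"
proof -
  have "mono_on {0<..} (\<lambda>t. - NN w t)"
    unfolding mono_on_def using N_anti[OF w] by auto
  then have "(\<lambda>t. - NN w t) \<in> borel_measurable (restrict_space borel {0<..})"
    by (rule borel_measurable_mono_on_fnc)
  then have "(\<lambda>t. - (- NN w t)) \<in> borel_measurable (restrict_space borel {0<..})"
    by measurable
  then have "(\<lambda>t. if t \<in> {0<..} then NN w t else 0) \<in> borel_measurable borel"
    by (subst measurable_restrict_space_iff[symmetric]) auto
  also have "(\<lambda>t. if t \<in> {0<..} then NN w t else 0) = NN w"
    using N_zero by (auto simp: fun_eq_iff)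
  finally show ?thesis .
qed

end

locale setting = hk q Gam d + fq f
  for q :: nat and Gam :: "real \<Rightarrow> real^'n::finite \<Rightarrow> real^'n \<Rightarrow> real" and d f +
  fixes \<phi> :: "real \<Rightarrow> real"
  assumes phi_nonneg: "\<forall>t\<ge>0. 0 \<le> \<phi> t"
    and phi_loc: "\<forall>T>0. set_integrable lborel {0..T} \<phi>"
begin

definition phip :: "real \<Rightarrow> real" where "phip t = indicator {0<..} t * \<phi> t"

lemma phip_nonneg: "0 \<le> phip t"
  unfolding phip_def using phi_nonneg by (auto simp: indicator_def)

lemma phi_T_int: assumes "0 < T" shows "integrable lborel (\<lambda>t. indicator {0..T} t * \<phi> t)"
proof -
  have "integrable lborel (\<lambda>x. indicator {0..T} x *\<^sub>R \<phi> x)"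
    using phi_loc assms unfolding set_integrable_def by blast
  then show ?thesis by simp
qed

lemma phi_T_meas: assumes "0 < T" shows "(\<lambda>t. indicator {0..T} t * \<phi> t) \<in> borel_measurable borel"
  using borel_measurable_integrable[OF phi_T_int[OF assms]] by simp

lemma phip_meas[measurable]: "phip \<in> borel_measurable borel"
proof (rule borel_measurable_LIMSEQ_real)
  show "(\<lambda>t. indicator {0<..} t * (indicator {0..real i + 1} t * \<phi> t)) \<in> borel_measurable borel" for i
    by (rule borel_measurable_times[OF _ phi_T_meas]) auto
  fix t :: real
  show "(\<lambda>i. indicator {0<..} t * (indicator {0..real i + 1} t * \<phi> t)) \<longlonglongrightarrow> phip t"
  proof (rule tendsto_eventually)
    have "eventually (\<lambda>i. t \<le> real i + 1) sequentially"
      using eventually_ge_at_top[of "nat \<lceil>t\<rceil>"] by (rule eventually_mono) linarith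
    then show "\<forall>\<^sub>F i in sequentially. indicator {0<..} t * (indicator {0..real i + 1} t * \<phi> t) = phip t"
      by (rule eventually_mono) (auto simp: phip_def indicator_def)
  qed
qed

lemma phi1_fin: "(\<integral>\<^sup>+t. ennreal (indicator {0..1} t * \<phi> t) \<partial>lborel) < \<infinity>"
proof -
  have "integrable lborel (\<lambda>t. indicator {0..1} t * \<phi> t)"
    using phi_T_int[of 1] by simp
  then show ?thesis
    using nn_integral_eq_integral[of lborel "\<lambda>t. indicator {0..1} t * \<phi> t"] phi_nonneg
    by (simp add: indicator_def)
qed

end


lemma snd_lborel_meas[measurable]: "snd \<in> M \<Otimes>\<^sub>M lborel \<rightarrow>\<^sub>M borel"
  using measurable_snd[of M lborel] by simp
lemma fst_lborel_meas[measurable]: "fst \<in> lborel \<Otimes>\<^sub>M M \<rightarrow>\<^sub>M borel"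
  using measurable_fst[of lborel M] by simp

lemma curry_meas2:
  fixes v :: "'a::euclidean_space \<Rightarrow> 'b::euclidean_space \<Rightarrow> 'c::topological_space"
  assumes V: "(\<lambda>p. v (fst p) (snd p)) \<in> borel_measurable (lborel \<Otimes>\<^sub>M lborel)"
    and a: "a \<in> M \<rightarrow>\<^sub>M borel" and b: "b \<in> M \<rightarrow>\<^sub>M borel"
  shows "(\<lambda>z. v (a z) (b z)) \<in> borel_measurable M"
proof -
  have "(\<lambda>z. (a z, b z)) \<in> M \<rightarrow>\<^sub>M (lborel \<Otimes>\<^sub>M lborel)"
    by (rule measurable_Pair) (use a b in auto)
  from measurable_compose[OF this V] show ?thesis by (simp only: fst_conv snd_conv)
qed

lemma pred_ioo[measurable]:
  fixes f g h :: "'a \<Rightarrow> real"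
  assumes [measurable]: "f \<in> borel_measurable M" "g \<in> borel_measurable M" "h \<in> borel_measurable M"
  shows "Measurable.pred M (\<lambda>x. f x \<in> {g x<..<h x})"
  unfolding greaterThanLessThan_iff by measurable

context setting begin

lemma SUP_Suc_inc:
  fixes g :: "nat \<Rightarrow> ennreal"
  assumes "\<And>k. g k \<le> g (Suc k)"
  shows "(SUP k. g (Suc k)) = (SUP k. g k)"
proof (rule antisym)
  show "(SUP k. g (Suc k)) \<le> (SUP k. g k)" by (rule SUP_least) (rule SUP_upper, simp)
  show "(SUP k. g k) \<le> (SUP k. g (Suc k))"
    by (rule SUP_least) (rule order_trans[OF assms], rule SUP_upper, simp)
qed

lemma main:
  fixes w :: "real^'n \<Rightarrow> real"
  assumes w: "pos_L1 w"
    and J: "(\<integral>\<^sup>+\<tau>. indicator {0<..} \<tau> * ennreal (\<phi> \<tau> * f (NN w \<tau>) / NN w \<tau>) \<partial>lborel) \<noteq> \<infinity>"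
  shows "\<exists>u0 u. pos_L1 u0 \<and> global_mild_solution Gam \<phi> f u0 u"
proof -
  note [measurable] = w_meas[OF w] A_meas[OF w] N_meas[OF w]
  have Nnn: "0 \<le> NN w \<tau>" for \<tau>
    using N_props(2)[OF w, of \<tau>] N_zero[of \<tau> w] by (cases "\<tau> > 0") auto
  define G where "G k \<tau> = indicator {0<..} \<tau> * ennreal (phip \<tau> * (fp (NN w \<tau> / real (Suc k)) / (NN w \<tau> / real (Suc k))))" for k :: nat and \<tau>
  have Gmeas[measurable]: "G k \<in> borel_measurable borel" for k unfolding G_def by measurable
  have "G 0 \<tau> = indicator {0<..} \<tau> * ennreal (\<phi> \<tau> * f (NN w \<tau>) / NN w \<tau>)" for \<tau>
    by (cases "\<tau> > 0") (auto simp: G_def phip_def fp_eq Nnn)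
  then have G0: "(\<integral>\<^sup>+\<tau>. G 0 \<tau> \<partial>lborel) < \<infinity>" using J by (simp add: less_top[symmetric])
  have Gle: "G k \<tau> \<le> G 0 \<tau>" for k \<tau>
  proof -
    have "NN w \<tau> * 1 \<le> NN w \<tau> * (1 + real k)" using Nnn[of \<tau>] by (intro mult_left_mono) auto
    then have le: "NN w \<tau> / real (Suc k) \<le> NN w \<tau>" using Nnn[of \<tau>] by (simp add: divide_le_eq)
    have "fp (NN w \<tau> / real (Suc k)) / (NN w \<tau> / real (Suc k)) \<le> fp (NN w \<tau> / real (Suc 0)) / (NN w \<tau> / real (Suc 0))"
      using quot_le_quot[OF _ le] Nnn[of \<tau>] by (simp add: fp_eq)
    then show ?thesis unfolding G_def using phip_nonneg[of \<tau>]
      by (intro mult_left_mono ennreal_leI) auto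
  qed
  have Glim: "(\<lambda>k. G k \<tau>) \<longlonglongrightarrow> 0" for \<tau>
  proof (cases "0 < \<tau> \<and> 0 < NN w \<tau>")
    case False
    then have "G k \<tau> = 0" for k using Nnn[of \<tau>] by (auto simp: G_def less_le)
    then show ?thesis by simp
  next
    case True
    have "(\<lambda>k. NN w \<tau> * inverse (real (Suc k))) \<longlonglongrightarrow> NN w \<tau> * 0"
      by (intro tendsto_mult tendsto_const LIMSEQ_inverse_real_of_nat)
    then have "filterlim (\<lambda>k. NN w \<tau> / real (Suc k)) (nhds 0) sequentially" by (simp add: divide_inverse)
    then have "filterlim (\<lambda>k. NN w \<tau> / real (Suc k)) (at_right 0) sequentially"
      by (rule tendsto_imp_filterlim_at_right) (use True in simp)
    from filterlim_compose[OF quot_lim this]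
    have "(\<lambda>k. f (NN w \<tau> / real (Suc k)) / (NN w \<tau> / real (Suc k))) \<longlonglongrightarrow> 0" .
    then have "(\<lambda>k. ennreal (phip \<tau> * (f (NN w \<tau> / real (Suc k)) / (NN w \<tau> / real (Suc k))))) \<longlonglongrightarrow> ennreal (phip \<tau> * 0)"
      by (intro tendsto_ennrealI tendsto_mult tendsto_const)
    then show ?thesis using True by (simp add: G_def fp_eq Nnn)
  qed
  have "(\<lambda>k. \<integral>\<^sup>+\<tau>. G k \<tau> \<partial>lborel) \<longlonglongrightarrow> (\<integral>\<^sup>+\<tau>. 0 \<partial>lborel)"
    using nn_integral_dominated_convergence[of G lborel "\<lambda>_. 0" "G 0"] Gle G0 Glim by simp
  moreover have half: "0 < ennreal (1/2)" by (subst ennreal_less_zero_iff) simp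
  ultimately have "eventually (\<lambda>k. (\<integral>\<^sup>+\<tau>. G k \<tau> \<partial>lborel) < ennreal (1/2)) sequentially"
    by (simp add: order_tendstoD(2))
  then obtain k where Gk: "(\<integral>\<^sup>+\<tau>. G k \<tau> \<partial>lborel) < ennreal (1/2)"
    by (auto simp: eventually_sequentially)
  define \<delta> where "\<delta> = 1 / real (Suc k)"
  have \<delta>: "0 < \<delta>" "\<delta> \<le> 1" by (auto simp: \<delta>_def)
  have Gk_eq: "G k \<tau> = indicator {0<..} \<tau> * ennreal (phip \<tau> * (f (\<delta> * NN w \<tau>) / (\<delta> * NN w \<tau>)))" for \<tau>
    using Nnn[of \<tau>] by (simp add: G_def \<delta>_def fp_eq)

  define u0 where "u0 y = \<delta> / 2 * w y" for y
  have u0: "pos_L1 u0" using w \<delta> unfolding pos_L1_def u0_def by auto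
  have T0: "(\<integral>\<^sup>+y. ennreal (Gam t y x * u0 y) \<partial>lborel) = ennreal (\<delta> / 2 * heat_sg Gam w t x)" for t x
  proof (cases "0 < t")
    case True
    have "(\<integral>\<^sup>+y. ennreal (Gam t y x * u0 y) \<partial>lborel) = ennreal (heat_sg Gam u0 t x)"
      using A_nn[OF u0 True] u0 by (simp add: ennreal_mult Gam_nonneg pos_L1_def)
    also have "heat_sg Gam u0 t x = \<delta> / 2 * heat_sg Gam w t x"
      unfolding heat_sg_def u0_def by (simp add: mult.left_commute)
    finally show ?thesis .
  next
    case False then show ?thesis by (simp add: Gam_zero A_zero)
  qed

  define \<Phi> where "\<Phi> v t x = (\<integral>\<^sup>+y. ennreal (Gam t y x * u0 y) \<partial>lborel) + (\<integral>\<^sup>+\<tau>. indicator {0<..<t} \<tau> * (\<integral>\<^sup>+y. ennreal (Gam (t - \<tau>) y x * phip \<tau> * fp (enn2real (v \<tau> y))) \<partial>lborel) \<partial>lborel)"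
    for v :: "real \<Rightarrow> real^'n \<Rightarrow> ennreal" and t x
  define Ub where "Ub t x = ennreal (\<delta> * heat_sg Gam w t x)" for t x
  have Ub_fin: "Ub t x < \<infinity>" for t x by (simp add: Ub_def)
  have u0m[measurable]: "u0 \<in> borel_measurable borel" unfolding u0_def[abs_def] by measurable
  have \<Phi>meas: "(\<lambda>p. \<Phi> v (fst p) (snd p)) \<in> borel_measurable (lborel \<Otimes>\<^sub>M lborel)"
    if V: "(\<lambda>p. v (fst p) (snd p)) \<in> borel_measurable (lborel \<Otimes>\<^sub>M lborel)" for v
  proof -
    note [measurable] = curry_meas2[OF V]
    show ?thesis unfolding \<Phi>_def by measurable
  qed
  have \<Phi>zero: "\<Phi> v t x = 0" if "t \<le> 0" for v t x
  proof -
    have "{0<..<t} = {}" using that by auto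
    then show ?thesis using that unfolding \<Phi>_def T0 by (simp add: A_zero)
  qed
  have \<Phi>bound: "\<Phi> v t x \<le> Ub t x" if vb: "\<And>t x. v t x \<le> Ub t x" for v t x
  proof (cases "0 < t")
    case False then show ?thesis using \<Phi>zero by simp
  next
    case t: True
    have inner: "indicator {0<..<t} \<tau> * (\<integral>\<^sup>+y. ennreal (Gam (t - \<tau>) y x * phip \<tau> * fp (enn2real (v \<tau> y))) \<partial>lborel)
        \<le> ennreal (\<delta> * heat_sg Gam w t x) * G k \<tau>" for \<tau>
    proof (cases "\<tau> \<in> {0<..<t}")
      case False then show ?thesis by simp
    next
      case True
      then have \<tau>: "0 < \<tau>" "\<tau> < t" by auto
      define r where "r = f (\<delta> * NN w \<tau>) / (\<delta> * NN w \<tau>)"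
      have r0: "0 \<le> r" unfolding r_def using Nnn[of \<tau>] \<delta> by (intro quot_nonneg) simp
      have pt: "ennreal (Gam (t - \<tau>) y x * phip \<tau> * fp (enn2real (v \<tau> y)))
          \<le> ennreal (phip \<tau> * r * \<delta>) * (ennreal (Gam (t - \<tau>) y x) * ennreal (heat_sg Gam w \<tau> y))"
        if Ay: "heat_sg Gam w \<tau> y \<le> NN w \<tau>" for y
      proof -
        let ?a = "heat_sg Gam w \<tau> y"
        have a0: "0 \<le> ?a" by (rule A_nonneg[OF w])
        have e1: "enn2real (v \<tau> y) \<le> \<delta> * ?a"
          using vb[of \<tau> y] a0 \<delta> by (intro enn2real_leI) (auto simp: Ub_def)
        have "fp (enn2real (v \<tau> y)) = f (enn2real (v \<tau> y))" by (simp add: fp_eq)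
        also have "\<dots> \<le> f (\<delta> * ?a)" using e1 by (intro f_mono) auto
        also have "\<dots> \<le> (\<delta> * ?a) * r"
        proof (cases "NN w \<tau> = 0")
          case True then have "?a = 0" using Ay a0 by simp
          then show ?thesis using f0 by simp
        next
          case False then have pos: "0 < \<delta> * NN w \<tau>" using Nnn[of \<tau>] \<delta> by (simp add: less_le)
          have "\<delta> * ?a \<le> \<delta> * NN w \<tau>" using Ay \<delta> by (intro mult_left_mono) auto
          then show ?thesis unfolding r_def using a0 \<delta> pos by (intro f_le_quot) auto
        qed
        finally have ff: "fp (enn2real (v \<tau> y)) \<le> \<delta> * ?a * r" .
        have "Gam (t - \<tau>) y x * phip \<tau> * fp (enn2real (v \<tau> y)) \<le> Gam (t - \<tau>) y x * phip \<tau> * (\<delta> * ?a * r)"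
          using ff Gam_nonneg phip_nonneg by (intro mult_left_mono) auto
        also have "\<dots> = (phip \<tau> * r * \<delta>) * (Gam (t - \<tau>) y x * ?a)" by (simp add: mult_ac)
        finally have "ennreal (Gam (t - \<tau>) y x * phip \<tau> * fp (enn2real (v \<tau> y))) \<le> ennreal ((phip \<tau> * r * \<delta>) * (Gam (t - \<tau>) y x * ?a))"
          by (rule ennreal_leI)
        also have "\<dots> = ennreal (phip \<tau> * r * \<delta>) * (ennreal (Gam (t - \<tau>) y x) * ennreal ?a)"
          using phip_nonneg r0 \<delta> Gam_nonneg a0 by (simp add: ennreal_mult)
        finally show ?thesis .
      qed
      have "(\<integral>\<^sup>+y. ennreal (Gam (t - \<tau>) y x * phip \<tau> * fp (enn2real (v \<tau> y))) \<partial>lborel)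
          \<le> (\<integral>\<^sup>+y. ennreal (phip \<tau> * r * \<delta>) * (ennreal (Gam (t - \<tau>) y x) * ennreal (heat_sg Gam w \<tau> y)) \<partial>lborel)"
        by (rule nn_integral_mono_AE) (use N_props(3)[OF w \<tau>(1)] pt in \<open>auto elim!: eventually_mono\<close>)
      also have "\<dots> = ennreal (phip \<tau> * r * \<delta>) * (\<integral>\<^sup>+y. ennreal (Gam (t - \<tau>) y x) * ennreal (heat_sg Gam w \<tau> y) \<partial>lborel)"
        by (rule nn_integral_cmult) measurable
      also have "\<dots> = ennreal (phip \<tau> * r * \<delta>) * ennreal (heat_sg Gam w t x)"
        using A_semi[OF w \<tau>(1) \<tau>(2)] by simp
      also have "\<dots> = ennreal (\<delta> * heat_sg Gam w t x) * G k \<tau>"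
        using \<tau> phip_nonneg r0 \<delta> A_nonneg[OF w]
        by (simp add: Gk_eq r_def[symmetric] ennreal_mult[symmetric] mult_ac)
      finally show ?thesis using True by simp
    qed
    have "(\<integral>\<^sup>+\<tau>. indicator {0<..<t} \<tau> * (\<integral>\<^sup>+y. ennreal (Gam (t - \<tau>) y x * phip \<tau> * fp (enn2real (v \<tau> y))) \<partial>lborel) \<partial>lborel)
        \<le> (\<integral>\<^sup>+\<tau>. ennreal (\<delta> * heat_sg Gam w t x) * G k \<tau> \<partial>lborel)"
      by (rule nn_integral_mono) (rule inner)
    also have "\<dots> = ennreal (\<delta> * heat_sg Gam w t x) * (\<integral>\<^sup>+\<tau>. G k \<tau> \<partial>lborel)"
      by (rule nn_integral_cmult) measurable
    also have "\<dots> \<le> ennreal (\<delta> * heat_sg Gam w t x) * ennreal (1/2)"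
      using Gk by (intro mult_left_mono) auto
    also have "\<dots> = ennreal (\<delta> * heat_sg Gam w t x * (1/2))"
      using \<delta> A_nonneg[OF w] by (intro ennreal_mult[symmetric]) auto
    also have "\<dots> = ennreal (\<delta> / 2 * heat_sg Gam w t x)"
      by (rule arg_cong[where f=ennreal]) simp
    finally have second: "(\<integral>\<^sup>+\<tau>. indicator {0<..<t} \<tau> * (\<integral>\<^sup>+y. ennreal (Gam (t - \<tau>) y x * phip \<tau> * fp (enn2real (v \<tau> y))) \<partial>lborel) \<partial>lborel)
        \<le> ennreal (\<delta> / 2 * heat_sg Gam w t x)" .
    have "\<Phi> v t x \<le> ennreal (\<delta> / 2 * heat_sg Gam w t x) + ennreal (\<delta> / 2 * heat_sg Gam w t x)"
      unfolding \<Phi>_def T0 by (rule add_left_mono[OF second])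
    also have "\<dots> = Ub t x"
      using \<delta> A_nonneg[OF w] by (simp add: Ub_def ennreal_plus[symmetric])
    finally show ?thesis .
  qed
  have \<Phi>mono: "\<Phi> v1 t x \<le> \<Phi> v2 t x"
    if le: "\<And>t x. v1 t x \<le> v2 t x" and ub: "\<And>t x. v2 t x \<le> Ub t x" for v1 v2 t x
  proof -
    have fpm: "fp (enn2real (v1 \<tau> y)) \<le> fp (enn2real (v2 \<tau> y))" for \<tau> y
    proof -
      have "enn2real (v1 \<tau> y) \<le> enn2real (v2 \<tau> y)"
        using le[of \<tau> y] ub[of \<tau> y] Ub_fin[of \<tau> y] by (intro enn2real_mono) auto
      then show ?thesis by (simp add: fp_eq f_mono)
    qed
    show ?thesis unfolding \<Phi>_def
      by (intro add_left_mono nn_integral_mono mult_left_mono ennreal_leI)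
         (use fpm Gam_nonneg phip_nonneg in auto)
  qed

  define it where "it k = (\<Phi> ^^ k) (\<lambda>t x. 0)" for k
  have it_Suc: "it (Suc k) = \<Phi> (it k)" for k by (simp add: it_def)
  have it_meas: "(\<lambda>p. it k (fst p) (snd p)) \<in> borel_measurable (lborel \<Otimes>\<^sub>M lborel)" for k
    by (induction k) (auto simp: it_Suc it_def[of 0] intro: \<Phi>meas)
  have it_ub: "it k t x \<le> Ub t x" for k t x
    by (induction k arbitrary: t x) (auto simp: it_Suc it_def[of 0] intro: \<Phi>bound)
  have it_mono: "it k t x \<le> it (Suc k) t x" for k t x
  proof (induction k arbitrary: t x)
    case 0 then show ?case by (simp add: it_def)
  next
    case (Suc k)
    show ?case unfolding it_Suc[of "Suc k"] it_Suc[of k] by (rule \<Phi>mono) (use Suc.IH it_ub[of "Suc k", unfolded it_Suc] in \<open>auto simp: it_Suc\<close>)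
  qed
  have inc: "incseq (\<lambda>k. it k t x)" for t x by (rule incseq_SucI) (rule it_mono)
  define uL where "uL t x = (SUP k. it k t x)" for t x
  have uL_ub: "uL t x \<le> Ub t x" for t x unfolding uL_def by (rule SUP_least) (rule it_ub)
  have uL_fin: "uL t x < \<infinity>" for t x using uL_ub[of t x] Ub_fin[of t x] by (rule le_less_trans)
  have uL_meas: "(\<lambda>p. uL (fst p) (snd p)) \<in> borel_measurable (lborel \<Otimes>\<^sub>M lborel)"
  proof -
    note [measurable] = it_meas
    show ?thesis unfolding uL_def by measurable
  qed
  have fp_it_mono: "fp (enn2real (it k \<tau> y)) \<le> fp (enn2real (it (Suc k) \<tau> y))" for k \<tau> y
  proof -
    have "enn2real (it k \<tau> y) \<le> enn2real (it (Suc k) \<tau> y)"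
      using it_mono[of k \<tau> y] it_ub[of "Suc k" \<tau> y] Ub_fin[of \<tau> y] by (intro enn2real_mono) auto
    then show ?thesis by (simp add: fp_eq f_mono)
  qed
  have Einc: "incseq (\<lambda>k. ennreal (Gam (t - \<tau>) y x * phip \<tau> * fp (enn2real (it k \<tau> y))))" for t \<tau> y x
    by (rule incseq_SucI, rule ennreal_leI, rule mult_left_mono[OF fp_it_mono]) (simp add: Gam_nonneg phip_nonneg)
  have fixpt: "\<Phi> uL t x = uL t x" for t x
  proof -
    have Eq: "ennreal (Gam (t - \<tau>) y x * phip \<tau> * fp (enn2real (uL \<tau> y)))
        = (SUP k. ennreal (Gam (t - \<tau>) y x * phip \<tau> * fp (enn2real (it k \<tau> y))))" for \<tau> y
    proof -
      have l1: "(\<lambda>k. it k \<tau> y) \<longlonglongrightarrow> ennreal (enn2real (uL \<tau> y))"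
        using LIMSEQ_SUP[OF inc[of \<tau> y]] uL_fin[of \<tau> y] by (simp add: uL_def[symmetric] less_top)
      have l2: "(\<lambda>k. enn2real (it k \<tau> y)) \<longlonglongrightarrow> enn2real (uL \<tau> y)"
        by (rule tendsto_enn2real[OF l1]) simp
      have cont: "isCont fp z" for z
        using fp_cont unfolding fp_def[abs_def] by (simp add: continuous_on_eq_continuous_at)
      have l3: "(\<lambda>k. fp (enn2real (it k \<tau> y))) \<longlonglongrightarrow> fp (enn2real (uL \<tau> y))"
        by (rule isCont_tendsto_compose[OF cont l2])
      have l4: "(\<lambda>k. ennreal (Gam (t - \<tau>) y x * phip \<tau> * fp (enn2real (it k \<tau> y))))
          \<longlonglongrightarrow> ennreal (Gam (t - \<tau>) y x * phip \<tau> * fp (enn2real (uL \<tau> y)))"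
        by (intro tendsto_ennrealI tendsto_mult tendsto_const l3)
      show ?thesis by (rule LIMSEQ_unique[OF l4 LIMSEQ_SUP[OF Einc]])
    qed
    have inner: "(\<integral>\<^sup>+y. ennreal (Gam (t - \<tau>) y x * phip \<tau> * fp (enn2real (uL \<tau> y))) \<partial>lborel)
        = (SUP k. \<integral>\<^sup>+y. ennreal (Gam (t - \<tau>) y x * phip \<tau> * fp (enn2real (it k \<tau> y))) \<partial>lborel)" for \<tau>
    proof -
      have m: "(\<lambda>y. ennreal (Gam (t - \<tau>) y x * phip \<tau> * fp (enn2real (it k \<tau> y)))) \<in> borel_measurable lborel" for k
      proof -
        note [measurable] = curry_meas2[OF it_meas[of k]]
        show ?thesis by measurable
      qed
      show ?thesis unfolding Eq
        by (rule nn_integral_monotone_convergence_SUP) (use Einc m in \<open>auto simp: incseq_def le_fun_def\<close>)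
    qed
    have outer: "(\<integral>\<^sup>+\<tau>. indicator {0<..<t} \<tau> * (\<integral>\<^sup>+y. ennreal (Gam (t - \<tau>) y x * phip \<tau> * fp (enn2real (uL \<tau> y))) \<partial>lborel) \<partial>lborel)
        = (SUP k. \<integral>\<^sup>+\<tau>. indicator {0<..<t} \<tau> * (\<integral>\<^sup>+y. ennreal (Gam (t - \<tau>) y x * phip \<tau> * fp (enn2real (it k \<tau> y))) \<partial>lborel) \<partial>lborel)"
    proof -
      have m: "(\<lambda>\<tau>. indicator {0<..<t} \<tau> * (\<integral>\<^sup>+y. ennreal (Gam (t - \<tau>) y x * phip \<tau> * fp (enn2real (it k \<tau> y))) \<partial>lborel)) \<in> borel_measurable lborel" for k
      proof -
        note [measurable] = curry_meas2[OF it_meas[of k]]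
        show ?thesis by measurable
      qed
      have i: "incseq (\<lambda>k \<tau>. indicator {0<..<t} \<tau> * (\<integral>\<^sup>+y. ennreal (Gam (t - \<tau>) y x * phip \<tau> * fp (enn2real (it k \<tau> y))) \<partial>lborel))"
        unfolding incseq_def le_fun_def
      proof (intro allI impI)
        fix m n :: nat and \<tau> assume "m \<le> n"
        then show "indicator {0<..<t} \<tau> * (\<integral>\<^sup>+y. ennreal (Gam (t - \<tau>) y x * phip \<tau> * fp (enn2real (it m \<tau> y))) \<partial>lborel)
          \<le> indicator {0<..<t} \<tau> * (\<integral>\<^sup>+y. ennreal (Gam (t - \<tau>) y x * phip \<tau> * fp (enn2real (it n \<tau> y))) \<partial>lborel)"
          using Einc by (intro mult_left_mono nn_integral_mono) (auto simp: incseq_def)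
      qed
      show ?thesis unfolding inner SUP_mult_left_ennreal
        by (rule nn_integral_monotone_convergence_SUP[OF i m])
    qed
    have "\<Phi> uL t x = (SUP k. \<Phi> (it k) t x)"
      unfolding \<Phi>_def outer by (simp add: ennreal_SUP_add_right)
    also have "\<dots> = (SUP k. it (Suc k) t x)" by (simp add: it_Suc)
    also have "\<dots> = uL t x" unfolding uL_def by (rule SUP_Suc_inc) (rule it_mono)
    finally show ?thesis .
  qed
  define u where "u t x = enn2real (uL t x)" for t x
  show ?thesis
  proof (intro exI conjI)
    show "pos_L1 u0" by (rule u0)
    show "global_mild_solution Gam \<phi> f u0 u" unfolding global_mild_solution_def
    proof (intro conjI allI impI)
      note [measurable] = uL_meas
      have "(\<lambda>p. u (fst p) (snd p)) \<in> borel_measurable (lborel \<Otimes>\<^sub>M lborel)"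
        unfolding u_def by measurable
      then show "(\<lambda>p. u (fst p) (snd p)) \<in> borel_measurable borel" by (simp add: lborel_prod)
      fix t x
      show "0 \<le> u t x" by (simp add: u_def)
      assume t: "0 < t"
      have "ennreal (u t x) = \<Phi> uL t x" using uL_fin[of t x] fixpt[of t x] by (simp add: u_def less_top)
      also have "\<dots> = (\<integral>\<^sup>+y. ennreal (Gam t y x * u0 y) \<partial>lborel) +
          (\<integral>\<^sup>+\<tau>. indicator {0<..<t} \<tau> *
              (\<integral>\<^sup>+y. ennreal (Gam (t - \<tau>) y x * \<phi> \<tau> * f (u \<tau> y)) \<partial>lborel) \<partial>lborel)"
        unfolding \<Phi>_def
        by (intro arg_cong2[where f="(+)"] refl nn_integral_cong)
           (auto simp: indicator_def phip_def fp_eq u_def)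
      finally show "ennreal (u t x) = (\<integral>\<^sup>+y. ennreal (Gam t y x * u0 y) \<partial>lborel) +
          (\<integral>\<^sup>+\<tau>. indicator {0<..<t} \<tau> *
              (\<integral>\<^sup>+y. ennreal (Gam (t - \<tau>) y x * \<phi> \<tau> * f (u \<tau> y)) \<partial>lborel) \<partial>lborel)" .
    qed
  qed
qed

end


lemma cube_meas: "measure lborel (cbox 0 (One::real^'n::finite)) = 1"
  by (simp add: measure_def emeasure_lborel_cbox_eq)

theorem theorem4p1:
  fixes \<sigma> :: "'n::finite \<Rightarrow> nat"
    and Gam :: "real \<Rightarrow> real^'n \<Rightarrow> real^'n \<Rightarrow> real"
    and d :: "real^'n \<Rightarrow> real^'n \<Rightarrow> real"
    and f \<phi> :: "real \<Rightarrow> real"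
  assumes sigma: "homog_exponents \<sigma>"
    and dist: "cc_metric d"
    and kernel: "heat_kernel_props (hom_dim \<sigma>) Gam d"
    and f_cont: "continuous_on {0..} f"
    and f0: "f 0 = 0"
    and f_pos: "\<forall>v>0. 0 < f v"
    and f_quot_mono: "mono_on {0<..} (\<lambda>v. f v / v)"
    and fM_lim: "((\<lambda>v. fM f v / v) \<longlongrightarrow> 0) (at_right 0)"
    and phi_nonneg: "\<forall>t\<ge>0. 0 \<le> \<phi> t"
    and phi_loc: "\<forall>T>0. set_integrable lborel {0..T} \<phi>"
    and no_global: "\<not> (\<exists>u0 u. pos_L1 u0 \<and> global_mild_solution Gam \<phi> f u0 u)"
  shows "(\<forall>w. pos_L1 w \<longrightarrow>
            (\<integral>\<^sup>+\<tau>. indicator {0<..} \<tau> *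
               ennreal (\<phi> \<tau> * f (real_of_ereal (Linf_norm (heat_sg Gam w \<tau>)))
                        / real_of_ereal (Linf_norm (heat_sg Gam w \<tau>))) \<partial>lborel) = \<infinity>)
       \<and> (\<forall>\<omega>>0.
            (\<integral>\<^sup>+\<tau>. indicator {1..} \<tau> *
               ennreal (\<phi> \<tau> * \<tau> powr (real (hom_dim \<sigma>) / 2)
                        * f (\<omega> * \<tau> powr (- real (hom_dim \<sigma>) / 2))) \<partial>lborel) = \<infinity>)"
proof -
  interpret S: setting "hom_dim \<sigma>" Gam d f \<phi>
    by unfold_locales (use kernel f_cont f0 f_pos f_quot_mono fM_lim phi_nonneg phi_loc in auto)
  let ?q = "real (hom_dim \<sigma>)"
  have part1: "(\<integral>\<^sup>+\<tau>. indicator {0<..} \<tau> * ennreal (\<phi> \<tau> * f (S.NN w \<tau>) / S.NN w \<tau>) \<partial>lborel) = \<infinity>"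
    if w: "pos_L1 w" for w
    using S.main[OF w] no_global by blast
  show ?thesis
  proof (intro conjI allI impI)
    fix w :: "real^'n \<Rightarrow> real" assume "pos_L1 w"
    from part1[OF this] show "(\<integral>\<^sup>+\<tau>. indicator {0<..} \<tau> *
               ennreal (\<phi> \<tau> * f (real_of_ereal (Linf_norm (heat_sg Gam w \<tau>)))
                        / real_of_ereal (Linf_norm (heat_sg Gam w \<tau>))) \<partial>lborel) = \<infinity>"
      by (simp add: S.NN_def)
  next
    fix \<omega> :: real assume \<omega>: "0 < \<omega>"
    define h2 where "h2 \<tau> = indicator {1..} \<tau> * ennreal (\<phi> \<tau> * \<tau> powr (?q / 2) * f (\<omega> * \<tau> powr (- ?q / 2)))" for \<tau>
    show "(\<integral>\<^sup>+\<tau>. indicator {1..} \<tau> *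
               ennreal (\<phi> \<tau> * \<tau> powr (real (hom_dim \<sigma>) / 2)
                        * f (\<omega> * \<tau> powr (- real (hom_dim \<sigma>) / 2))) \<partial>lborel) = \<infinity>"
    proof (rule ccontr)
      assume fin: "(\<integral>\<^sup>+\<tau>. indicator {1..} \<tau> *
               ennreal (\<phi> \<tau> * \<tau> powr (real (hom_dim \<sigma>) / 2)
                        * f (\<omega> * \<tau> powr (- real (hom_dim \<sigma>) / 2))) \<partial>lborel) \<noteq> \<infinity>"
      then have fin2: "(\<integral>\<^sup>+\<tau>. h2 \<tau> \<partial>lborel) < \<infinity>" by (simp add: h2_def less_top)
      obtain K where K: "K > 0" "\<forall>s x y. 0 < s \<longrightarrow> Gam s x y \<le> K / s powr (?q / 2)"
        using S.Gam_bound by blast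
      define m where "m = \<omega> / K"
      have m: "0 < m" using \<omega> K by (simp add: m_def)
      define w where "w y = m * indicator (cbox 0 (One::real^'n)) y" for y
      have intw: "(\<integral>y. w y \<partial>lborel) = m" unfolding w_def using cube_meas by simp
      have intw': "integrable lborel w" unfolding w_def[abs_def]
        by (intro integrable_mult_right integrable_real_indicator) (auto simp: emeasure_lborel_cbox_finite)
      have wnn: "\<forall>x. 0 \<le> w x" using m by (simp add: w_def)
      have w: "pos_L1 w" unfolding pos_L1_def using intw intw' m wnn by simp
      have wm: "\<forall>y. w y \<le> m" using m by (auto simp: w_def indicator_def)
      have Nnn: "0 \<le> S.NN w \<tau>" for \<tau>
        using S.N_props(2)[OF w, of \<tau>] S.N_zero[of \<tau> w] by (cases "\<tau> > 0") auto
      have N1: "S.NN w \<tau> \<le> m" if "0 < \<tau>" for \<tau>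
        using S.N_le[OF w that] S.A_le_sup[OF w that wm] by blast
      have N2: "S.NN w \<tau> \<le> \<omega> * \<tau> powr (- ?q / 2)" if t: "0 < \<tau>" for \<tau>
      proof -
        have "heat_sg Gam w \<tau> x \<le> K / \<tau> powr (?q / 2) * m" for x
          using S.A_le[OF w t, of x "K / \<tau> powr (?q / 2)"] K t intw by auto
        also have "K / \<tau> powr (?q / 2) * m = \<omega> * \<tau> powr (- ?q / 2)"
          using K t by (simp add: m_def powr_minus divide_simps)
        finally show ?thesis using S.N_le[OF w t] by blast
      qed
      define c1 where "c1 = f m / m"
      have bound: "indicator {0<..} \<tau> * ennreal (\<phi> \<tau> * f (S.NN w \<tau>) / S.NN w \<tau>)
          \<le> ennreal c1 * ennreal (indicator {0..1} \<tau> * \<phi> \<tau>) + ennreal (1 / \<omega>) * h2 \<tau>" for \<tau>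
      proof (cases "0 < \<tau>")
        case False then show ?thesis by simp
      next
        case t: True
        have ph: "0 \<le> \<phi> \<tau>" using phi_nonneg t by simp
        show ?thesis
        proof (cases "\<tau> < 1")
          case True
          have "f (S.NN w \<tau>) / S.NN w \<tau> \<le> c1"
            unfolding c1_def using S.quot_le_quot[OF Nnn N1[OF t]] .
          then have "\<phi> \<tau> * (f (S.NN w \<tau>) / S.NN w \<tau>) \<le> \<phi> \<tau> * c1"
            using ph by (rule mult_left_mono)
          then have "\<phi> \<tau> * f (S.NN w \<tau>) / S.NN w \<tau> \<le> c1 * (indicator {0..1} \<tau> * \<phi> \<tau>)"
            using t True by (simp add: mult.commute)
          then have "ennreal (\<phi> \<tau> * f (S.NN w \<tau>) / S.NN w \<tau>) \<le> ennreal c1 * ennreal (indicator {0..1} \<tau> * \<phi> \<tau>)"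
            using ph S.quot_nonneg[of m] m by (simp add: c1_def ennreal_mult[symmetric] ennreal_leI)
          then show ?thesis using t by (simp add: order_trans[OF _ add_increasing2])
        next
          case False
          define b where "b = \<omega> * \<tau> powr (- ?q / 2)"
          have b: "0 \<le> b" using \<omega> by (simp add: b_def)
          have "f (S.NN w \<tau>) / S.NN w \<tau> \<le> f b / b"
            unfolding b_def using S.quot_le_quot[OF Nnn N2[OF t]] .
          also have "f b / b = (1 / \<omega>) * (\<tau> powr (?q / 2) * f b)"
            using \<omega> t by (simp add: b_def powr_minus divide_simps)
          finally have "\<phi> \<tau> * (f (S.NN w \<tau>) / S.NN w \<tau>) \<le> \<phi> \<tau> * ((1 / \<omega>) * (\<tau> powr (?q / 2) * f b))"
            using ph by (rule mult_left_mono)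
          then have "\<phi> \<tau> * f (S.NN w \<tau>) / S.NN w \<tau> \<le> (1 / \<omega>) * (\<phi> \<tau> * \<tau> powr (?q / 2) * f b)"
            by (simp add: mult_ac)
          then have "ennreal (\<phi> \<tau> * f (S.NN w \<tau>) / S.NN w \<tau>) \<le> ennreal (1 / \<omega>) * ennreal (\<phi> \<tau> * \<tau> powr (?q / 2) * f b)"
            using ph \<omega> S.f_nonneg[OF b] by (simp add: ennreal_mult[symmetric] ennreal_leI)
          then show ?thesis using t False by (simp add: h2_def b_def add_increasing)
        qed
      qed
      have m1[measurable]: "(\<lambda>\<tau>. indicator {0..1} \<tau> * \<phi> \<tau>) \<in> borel_measurable borel"
        by (rule S.phi_T_meas) simp
      have h2eq: "h2 \<tau> = indicator {1..} \<tau> * ennreal (S.phip \<tau> * \<tau> powr (?q / 2) * S.fp (\<omega> * \<tau> powr (- ?q / 2)))" for \<tau>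
        using \<omega> by (auto simp: h2_def S.phip_def S.fp_eq indicator_def)
      have m2[measurable]: "h2 \<in> borel_measurable borel"
        unfolding h2eq[abs_def] by measurable
      have "(\<integral>\<^sup>+\<tau>. indicator {0<..} \<tau> * ennreal (\<phi> \<tau> * f (S.NN w \<tau>) / S.NN w \<tau>) \<partial>lborel)
          \<le> (\<integral>\<^sup>+\<tau>. ennreal c1 * ennreal (indicator {0..1} \<tau> * \<phi> \<tau>) + ennreal (1 / \<omega>) * h2 \<tau> \<partial>lborel)"
        by (rule nn_integral_mono) (rule bound)
      also have "\<dots> = ennreal c1 * (\<integral>\<^sup>+\<tau>. ennreal (indicator {0..1} \<tau> * \<phi> \<tau>) \<partial>lborel) + ennreal (1 / \<omega>) * (\<integral>\<^sup>+\<tau>. h2 \<tau> \<partial>lborel)"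
        by (simp add: nn_integral_add nn_integral_cmult)
      also have "\<dots> < \<infinity>"
        using S.phi1_fin fin2 by (simp add: ennreal_mult_less_top less_top)
      finally show False using part1[OF w] by simp
    qed
  qed
qed


end
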